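(* Let $q$ be a prime power and $n$ a positive integer, and let $U,V$ be two distinct $\mathbb{F}_q$-subspaces of $\mathbb{F}_{q^n}$ such that $U\cap V=\{0\}$ and $\dim(U\cap\alpha V)\leq 1$ for every $\alpha\in\mathbb{F}_{q^n}^*$. If $$\mathbb{F}_q+(U+V)+UV=\mathbb{F}_q\oplus(U+V)\oplus UV,$$ then $\dim\big((\mathbb{F}_q+U)\cap\alpha(\mathbb{F}_q+V)\big)\leq 1$ for every $\alpha\in\mathbb{F}_{q^n}^*$.
   Context: All subspaces are $\mathbb{F}_q$-subspaces of $\mathbb{F}_{q^n}$, with $\mathbb{F}_q\subseteq\mathbb{F}_{q^n}$ the prime-power subfield. For subspaces $U,V$: $U+V=\{u+v\mid u\in U,v\in V\}$, $UV$ is the $\mathbb{F}_q$-span of $\{uv\mid u\in U,v\in V\}$, and $\oplus$ denotes that the sum is direct. *)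

theory Defs
  imports "HOL-Algebra.Algebra"
begin

definition (in ring) span_set :: "'a set \<Rightarrow> 'a set \<Rightarrow> 'a set" where
  "span_set K S = {x. \<exists>us. set us \<subseteq> S \<and> x \<in> Span K us}"

definition (in ring) prod_space :: "'a set \<Rightarrow> 'a set \<Rightarrow> 'a set \<Rightarrow> 'a set" where
  "prod_space K U V = span_set K {u \<otimes> v | u v. u \<in> U \<and> v \<in> V}"

definition (in ring) scale_set :: "'a \<Rightarrow> 'a set \<Rightarrow> 'a set" where
  "scale_set \<alpha> V = (\<lambda>v. \<alpha> \<otimes> v) ` V"

definition (in ring) direct_sum3 :: "'a set \<Rightarrow> 'a set \<Rightarrow> 'a set \<Rightarrow> bool" where
  "direct_sum3 A B C \<longleftrightarrow>
     (\<forall>a\<in>A. \<forall>b\<in>B. \<forall>c\<in>C. a \<oplus> b \<oplus> c = \<zero> \<longrightarrow> a = \<zero> \<and> b = \<zero> \<and> c = \<zero>)"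

end

theory Submission
  imports Defs
begin


context ring begin

lemma subalgI':
  assumes "W \<subseteq> carrier R" "\<zero> \<in> W" "\<And>x y. x \<in> W \<Longrightarrow> y \<in> W \<Longrightarrow> x \<oplus> y \<in> W"
    "\<And>x. x \<in> W \<Longrightarrow> \<ominus> x \<in> W" "\<And>k x. k \<in> K \<Longrightarrow> x \<in> W \<Longrightarrow> k \<otimes> x \<in> W"
  shows "subalgebra K W R"
  unfolding subalgebra_def subalgebra_axioms_def
  using assms by (auto intro!: add.subgroupI)

lemma subalgE':
  assumes "subalgebra K W R"
  shows "W \<subseteq> carrier R" "\<zero> \<in> W" "\<And>x y. x \<in> W \<Longrightarrow> y \<in> W \<Longrightarrow> x \<oplus> y \<in> W"
    "\<And>x. x \<in> W \<Longrightarrow> \<ominus> x \<in> W" "\<And>k x. k \<in> K \<Longrightarrow> x \<in> W \<Longrightarrow> k \<otimes> x \<in> W"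
  using assms unfolding subalgebra_def subalgebra_axioms_def
  by (auto intro: additive_subgroup.a_closed additive_subgroup.zero_closed
     additive_subgroup.a_inv_closed dest: additive_subgroup.a_subset simp: additive_subgroup_def[symmetric])

lemma set_add_mem: "x \<in> A <+> B \<longleftrightarrow> (\<exists>a\<in>A. \<exists>b\<in>B. x = a \<oplus> b)"
  by (auto simp: set_add_def')

lemma K_subalg: "subfield K R \<Longrightarrow> subalgebra K K R"
  apply (rule subalgI')
  using subringE[OF subfieldE(1)] subfieldE(3) by auto

lemma sum_subalg:
  assumes "subalgebra K A R" "subalgebra K B R" "K \<subseteq> carrier R"
  shows "subalgebra K (A <+> B) R"
proof (rule subalgI')
  note a = subalgE'[OF assms(1)] and b = subalgE'[OF assms(2)]
  show "A <+> B \<subseteq> carrier R" using a(1) b(1) by (auto simp: set_add_mem subset_iff)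
  show "\<zero> \<in> A <+> B" using a(2) b(2) by (auto simp: set_add_mem intro!: bexI[of _ \<zero>])
  show "x \<oplus> y \<in> A <+> B" if hxy: "x \<in> A <+> B" "y \<in> A <+> B" for x y :: 'a
  proof -
    obtain a1 b1 a2 b2 where "a1 \<in> A" "b1 \<in> B" "a2 \<in> A" "b2 \<in> B" "x = a1 \<oplus> b1" "y = a2 \<oplus> b2"
      using hxy by (auto simp: set_add_mem)
    moreover have "(a1 \<oplus> b1) \<oplus> (a2 \<oplus> b2) = (a1 \<oplus> a2) \<oplus> (b1 \<oplus> b2)"
      using calculation a(1) b(1) by (simp add: subset_iff a_ac)
    ultimately show ?thesis using a(3) b(3) by (simp add: set_add_mem) blast
  qed
  show "\<ominus> x \<in> A <+> B" if hx: "x \<in> A <+> B" for x :: 'a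
  proof -
    obtain a1 b1 where "a1 \<in> A" "b1 \<in> B" "x = a1 \<oplus> b1"
      using hx by (auto simp: set_add_mem)
    moreover have "\<ominus> (a1 \<oplus> b1) = (\<ominus> a1) \<oplus> (\<ominus> b1)"
      using calculation a(1) b(1) by (simp add: subset_iff minus_add)
    ultimately show ?thesis using a(4) b(4) by (simp add: set_add_mem) blast
  qed
  show "k \<otimes> x \<in> A <+> B" if hk: "k \<in> K" and hx: "x \<in> A <+> B" for k x :: 'a
  proof -
    obtain a1 b1 where "a1 \<in> A" "b1 \<in> B" "x = a1 \<oplus> b1"
      using hx by (auto simp: set_add_mem)
    moreover have "k \<otimes> (a1 \<oplus> b1) = (k \<otimes> a1) \<oplus> (k \<otimes> b1)"
      using calculation a(1) b(1) hk assms(3) by (auto simp: r_distr subset_iff)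
    ultimately show ?thesis using a(5) b(5) hk by (simp add: set_add_mem) blast
  qed
qed

lemma findim:
  assumes "finite (carrier R)" "subfield K R" "subalgebra K V R"
  shows "finite_dimension K V"
proof -
  define S where "S = { Us. set Us \<subseteq> V \<and> independent K Us }"
  have "length ` S \<subseteq> {..card (carrier R)}"
  proof
    fix m assume "m \<in> length ` S"
    then obtain Us where "set Us \<subseteq> V" "independent K Us" "m = length Us" unfolding S_def by auto
    then have "distinct Us" using independent_distinct[OF assms(2)] by blast
    then have "m = card (set Us)" using \<open>m = length Us\<close> by (simp add: distinct_card)
    also have "\<dots> \<le> card (carrier R)"
      using \<open>set Us \<subseteq> V\<close> subalgE'(1)[OF assms(3)] assms(1) by (intro card_mono) auto
    finally show "m \<in> {..card (carrier R)}" by simp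
  qed
  moreover have "[] \<in> S"
    unfolding S_def by simp
  hence "length ` S \<noteq> {}" by blast
  ultimately obtain m where m: "m \<in> length ` S" and greatest: "\<And>k. k \<in> length ` S \<Longrightarrow> k \<le> m"
    by (meson Max_ge Max_in finite_atMost rev_finite_subset)
  then obtain Us where Us: "set Us \<subseteq> V" "independent K Us" "m = length Us"
      unfolding S_def by auto
  have "Span K Us = V"
  proof (rule ccontr)
    assume "\<not> Span K Us = V" then have "Span K Us \<subset> V"
      using subalgebra_Span_incl[OF assms(2,3) Us(1)] by blast
    then obtain v where v:"v \<in> V" "v \<notin> Span K Us"
      by blast
    hence "independent K (v # Us)"
      using independent.li_Cons[OF _ _ Us(2)] subalgebra_in_carrier[OF assms(3)] by auto
    hence "(v # Us) \<in> S"
      unfolding S_def using Us(1) v(1) by auto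
    hence "length (v # Us) \<le> m"
      using greatest by blast
    moreover have "length (v # Us) = Suc m"
      using Us(3) by auto
    ultimately show False by simp
  qed
  thus ?thesis
    using finite_dimensionI[OF dimension_independent[OF Us(2)]] by simp
qed

lemma dim_mono:
  assumes "finite (carrier R)" "subfield K R" "subalgebra K V R" "subalgebra K E R" "V \<subseteq> E"
  shows "dim K V \<le> dim K E"
proof -
  have dE: "dimension (dim K E) K E"
    using finite_dimensionE[OF assms(2) findim[OF assms(1,2,4)]] by (simp add: over_def)
  have dV: "dimension (dim K V) K V"
    using finite_dimensionE[OF assms(2) findim[OF assms(1,2,3)]] by (simp add: over_def)
  obtain Vs where Vs: "set Vs \<subseteq> carrier R" "independent K Vs" "length Vs = dim K V" "Span K Vs = V"
    using exists_base[OF assms(2) dV] by blast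
  have "set Vs \<subseteq> V" using Span_base_incl[OF assms(2) Vs(1)] Vs(4) by simp
  then show ?thesis
    using independent_length_le_dimension[OF assms(2) dE Vs(2)] assms(5) Vs(3) by auto
qed

end

context cring begin

lemma scale_subalg:
  assumes "subalgebra K W R" "K \<subseteq> carrier R" "\<alpha> \<in> carrier R"
  shows "subalgebra K (scale_set \<alpha> W) R"
proof (rule subalgI')
  note a = subalgE'[OF assms(1)]
  show "scale_set \<alpha> W \<subseteq> carrier R" using a(1) assms(3) by (auto simp: scale_set_def)
  show "\<zero> \<in> scale_set \<alpha> W" using a(2) assms(3) by (auto simp: scale_set_def intro!: image_eqI[of _ _ \<zero>])
  show "x \<oplus> y \<in> scale_set \<alpha> W" if "x \<in> scale_set \<alpha> W" "y \<in> scale_set \<alpha> W" for x y :: 'a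
    using that a(1,3) assms(3) by (auto simp: scale_set_def r_distr[symmetric] subset_iff)
  show "\<ominus> x \<in> scale_set \<alpha> W" if "x \<in> scale_set \<alpha> W" for x :: 'a
    using that a(1,4) assms(3) by (auto simp: scale_set_def r_minus[symmetric] subset_iff)
  show "k \<otimes> x \<in> scale_set \<alpha> W" if hk: "k \<in> K" and hx: "x \<in> scale_set \<alpha> W" for k x :: 'a
  proof -
    obtain w where w: "w \<in> W" "x = \<alpha> \<otimes> w" using hx unfolding scale_set_def by blast
    have "k \<otimes> (\<alpha> \<otimes> w) = \<alpha> \<otimes> (k \<otimes> w)"
      using w a(1) assms that by (auto simp: m_lcomm subset_iff)
    then show ?thesis using w a(5) that by (auto simp: scale_set_def)
  qed
qed

end



context ring begin

lemma prod_mem: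
  assumes K: "subfield K R" and "U \<subseteq> carrier R" "V \<subseteq> carrier R" "u \<in> U" "v \<in> V"
  shows "u \<otimes> v \<in> prod_space K U V"
proof -
  have c: "u \<otimes> v \<in> carrier R" using assms by auto
  have "u \<otimes> v \<in> Span K [u \<otimes> v]" using Span_base_incl[OF K, of "[u \<otimes> v]"] c by auto
  moreover have "set [u \<otimes> v] \<subseteq> {u \<otimes> v | u v. u \<in> U \<and> v \<in> V}" using assms by auto
  ultimately show ?thesis unfolding prod_space_def span_set_def by (intro CollectI exI[of _ "[u \<otimes> v]"]) simp
qed

lemma prod_diff:
  assumes K: "subfield K R" and "U \<subseteq> carrier R" "V \<subseteq> carrier R"
    and x: "x \<in> prod_space K U V" and y: "y \<in> prod_space K U V"
  shows "x \<ominus> y \<in> prod_space K U V"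
proof -
  let ?P = "{u \<otimes> v | u v. u \<in> U \<and> v \<in> V}"
  have P: "?P \<subseteq> carrier R" using assms(2,3) by auto
  obtain us1 where 1: "set us1 \<subseteq> ?P" "x \<in> Span K us1" using x unfolding prod_space_def span_set_def by blast
  obtain us2 where 2: "set us2 \<subseteq> ?P" "y \<in> Span K us2" using y unfolding prod_space_def span_set_def by blast
  have c1: "set us1 \<subseteq> carrier R" and c2: "set us2 \<subseteq> carrier R" using 1 2 P by auto
  have c: "set (us1 @ us2) \<subseteq> carrier R" using c1 c2 by auto
  have "x \<in> Span K (us1 @ us2)" using mono_Span_append(1)[OF K c1 c2] 1 by auto
  moreover have "y \<in> Span K (us1 @ us2)" using mono_Span_append(2)[OF K c2 c1] 2 by auto
  ultimately have "x \<oplus> (\<ominus> y) \<in> Span K (us1 @ us2)"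
    using Span_subgroup_props[OF K c] by auto
  moreover have "x \<ominus> y = x \<oplus> (\<ominus> y)" by (simp add: minus_eq)
  ultimately show ?thesis unfolding prod_space_def span_set_def using 1 2 by (intro CollectI exI[of _ "us1 @ us2"]) auto
qed

end

context cring begin

lemma key_rel:
  assumes K: "subfield K R" and sU: "subalgebra K U R" and sV: "subalgebra K V R"
    and UV: "U \<inter> V = {\<zero>}" and ds: "direct_sum3 K (U <+> V) (prod_space K U V)"
    and al: "\<alpha> \<in> carrier R"
    and mem: "a0 \<in> K" "b0 \<in> K" "a \<in> K" "b \<in> K" "u0 \<in> U" "u \<in> U" "v0 \<in> V" "v \<in> V"
    and e0: "a0 \<oplus> u0 = \<alpha> \<otimes> (b0 \<oplus> v0)" and e: "a \<oplus> u = \<alpha> \<otimes> (b \<oplus> v)"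
  shows "a0 \<otimes> b = a \<otimes> b0" "b \<otimes> u0 = b0 \<otimes> u" "a0 \<otimes> v = a \<otimes> v0"
proof -
  note U = subalgE'[OF sU] and V = subalgE'[OF sV]
  have Kc: "K \<subseteq> carrier R" using subfieldE(3)[OF K] .
  note Ks = subringE[OF subfieldE(1)[OF K]]
  have c: "a0 \<in> carrier R" "b0 \<in> carrier R" "a \<in> carrier R" "b \<in> carrier R"
     "u0 \<in> carrier R" "u \<in> carrier R" "v0 \<in> carrier R" "v \<in> carrier R"
    using mem Kc U(1) V(1) by auto
  have eq: "(a0 \<oplus> u0) \<otimes> (b \<oplus> v) = (a \<oplus> u) \<otimes> (b0 \<oplus> v0)"
  proof -
    have X: "(b0 \<oplus> v0) \<otimes> (b \<oplus> v) = (b \<oplus> v) \<otimes> (b0 \<oplus> v0)" by (rule m_comm) (use c in auto)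
    show ?thesis unfolding e0 e using c al X by (simp add: m_assoc)
  qed
  define k where "k = a0 \<otimes> b \<ominus> a \<otimes> b0"
  define w1 where "w1 = b \<otimes> u0 \<ominus> b0 \<otimes> u"
  define w2 where "w2 = a0 \<otimes> v \<ominus> a \<otimes> v0"
  define p where "p = u0 \<otimes> v \<ominus> u \<otimes> v0"
  have "k \<oplus> (w1 \<oplus> w2) \<oplus> p = (a0 \<oplus> u0) \<otimes> (b \<oplus> v) \<ominus> (a \<oplus> u) \<otimes> (b0 \<oplus> v0)"
    unfolding k_def w1_def w2_def p_def using c by algebra
  also have "\<dots> = \<zero>" using eq c by simp
  finally have z: "k \<oplus> (w1 \<oplus> w2) \<oplus> p = \<zero>" .
  have kK: "k \<in> K" unfolding k_def minus_eq using mem Ks by auto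
  have w1U: "w1 \<in> U" unfolding w1_def minus_eq using mem U by auto
  have w2V: "w2 \<in> V" unfolding w2_def minus_eq using mem V by auto
  have wUV: "w1 \<oplus> w2 \<in> U <+> V" using w1U w2V by (auto simp: set_add_mem)
  have pP: "p \<in> prod_space K U V" unfolding p_def
    using prod_diff[OF K U(1) V(1) prod_mem[OF K U(1) V(1) mem(5,8)] prod_mem[OF K U(1) V(1) mem(6,7)]] .
  have k0: "k = \<zero>" and w0: "w1 \<oplus> w2 = \<zero>"
    using ds[unfolded direct_sum3_def, rule_format, OF kK wUV pP z] by auto
  have w1c: "w1 \<in> carrier R" "w2 \<in> carrier R" using w1U w2V U(1) V(1) by auto
  have "w1 = \<ominus> w2" using minus_equality[OF w0 w1c(2) w1c(1)] by simp
  then have "w1 \<in> V" using V(4) w2V by simp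
  then have w10: "w1 = \<zero>" using w1U UV by auto
  then have w20: "w2 = \<zero>" using w0 w1c by simp
  show "a0 \<otimes> b = a \<otimes> b0" using k0 c unfolding k_def by simp
  show "b \<otimes> u0 = b0 \<otimes> u" using w10 c unfolding w1_def by simp
  show "a0 \<otimes> v = a \<otimes> v0" using w20 c unfolding w2_def by simp
qed

end

theorem lemma3p9:
  fixes R :: "('a, 'b) ring_scheme" (structure)
    and K U V :: "'a set" and q n :: nat
  assumes "field R" and "finite (carrier R)"
    and "subfield K R" and "card K = q" and "card (carrier R) = q ^ n" and "n > 0"
    and "subalgebra K U R" and "subalgebra K V R" and "U \<noteq> V"
    and "U \<inter> V = {\<zero>}"
    and "\<forall>\<alpha>\<in>carrier R - {\<zero>}. ring.dim R K (U \<inter> ring.scale_set R \<alpha> V) \<le> 1"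
    and "ring.direct_sum3 R K (U <+> V) (ring.prod_space R K U V)"
  shows "\<forall>\<alpha>\<in>carrier R - {\<zero>}.
           ring.dim R K ((K <+> U) \<inter> ring.scale_set R \<alpha> (K <+> V)) \<le> 1"
proof
  interpret field R by fact
  note fin = assms(2) and K = assms(3) and sU = assms(7) and sV = assms(8) and UV = assms(10)
    and ds = assms(12)
  have Kc: "K \<subseteq> carrier R" using subfieldE(3)[OF K] .
  note U = subalgE'[OF sU] and V = subalgE'[OF sV]
  fix \<alpha> assume al: "\<alpha> \<in> carrier R - {\<zero>}"
  define S where "S = (K <+> U) \<inter> scale_set \<alpha> (K <+> V)"
  define T where "T = U \<inter> scale_set \<alpha> V"
  have sK: "subalgebra K K R" using K_subalg[OF K] .
  have sS: "subalgebra K S R" unfolding S_def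
    using subalgebra_inter[OF sum_subalg[OF sK sU Kc] scale_subalg[OF sum_subalg[OF sK sV Kc] Kc]] al by auto
  have sT: "subalgebra K T R" unfolding T_def
    using subalgebra_inter[OF sU scale_subalg[OF sV Kc]] al by auto
  have dT: "dim K T \<le> 1" using assms(11) al unfolding T_def by auto
  show "dim K S \<le> 1"
  proof (cases "S \<subseteq> T")
    case True
    then show ?thesis using dim_mono[OF fin K sS sT] dT by linarith
  next
    case False
    then obtain x0 where x0S: "x0 \<in> S" and x0T: "x0 \<notin> T" by blast
    obtain a0 u0 where a0: "a0 \<in> K" and u0: "u0 \<in> U" and ex0: "x0 = a0 \<oplus> u0"
      using x0S unfolding S_def by (auto simp: set_add_mem)
    obtain w0 :: 'a where w0: "w0 \<in> K <+> V" and xw0: "x0 = \<alpha> \<otimes> w0"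
      using x0S unfolding S_def scale_set_def by blast
    obtain b0 v0 where b0: "b0 \<in> K" and v0: "v0 \<in> V" and ew0: "w0 = b0 \<oplus> v0"
      using w0 by (auto simp: set_add_mem)
    have c0: "a0 \<in> carrier R" "u0 \<in> carrier R" "b0 \<in> carrier R" "v0 \<in> carrier R"
      using a0 u0 b0 v0 Kc U(1) V(1) by auto
    have e0: "a0 \<oplus> u0 = \<alpha> \<otimes> (b0 \<oplus> v0)" using ex0 xw0 ew0 by simp
    have ab0: "a0 \<noteq> \<zero> \<or> b0 \<noteq> \<zero>"
    proof (rule ccontr)
      assume "\<not> ?thesis"
      then have "x0 = u0" "x0 = \<alpha> \<otimes> v0" using ex0 xw0 ew0 c0 by auto
      then have "x0 \<in> T" unfolding T_def scale_set_def using u0 v0 by auto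
      with x0T show False by simp
    qed
    have zT: "\<zero> \<in> T" using subalgE'(2)[OF sT] .
    have x0ne: "x0 \<noteq> \<zero>" using zT x0T by auto
    have x0c: "x0 \<in> carrier R" using x0S subalgE'(1)[OF sS] by auto
    have SpanEq: "Span K [x0] = {k \<otimes> x0 | k. k \<in> K}"
      using x0c Kc by (auto simp: line_extension_mem_iff subset_iff)
    have "S = Span K [x0]"
    proof
      show "Span K [x0] \<subseteq> S" unfolding SpanEq using subalgE'(5)[OF sS _ x0S] by auto
    next
      show "S \<subseteq> Span K [x0]"
      proof
        fix y assume yS: "y \<in> S"
        obtain a u where a: "a \<in> K" and u: "u \<in> U" and ey: "y = a \<oplus> u"
          using yS unfolding S_def by (auto simp: set_add_mem)
        obtain w :: 'a where w: "w \<in> K <+> V" and yw: "y = \<alpha> \<otimes> w"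
          using yS unfolding S_def scale_set_def by blast
        obtain b v where b: "b \<in> K" and v: "v \<in> V" and ew: "w = b \<oplus> v"
          using w by (auto simp: set_add_mem)
        have c: "a \<in> carrier R" "u \<in> carrier R" "b \<in> carrier R" "v \<in> carrier R"
          using a u b v Kc U(1) V(1) by auto
        have e: "a \<oplus> u = \<alpha> \<otimes> (b \<oplus> v)" using ey yw ew by simp
        have alc: "\<alpha> \<in> carrier R" using al by auto
        note rel = key_rel[OF K sU sV UV ds alc a0 b0 a b u0 u v0 v e0 e]
        have "\<exists>\<mu>\<in>K. y = \<mu> \<otimes> x0"
        proof (cases "b0 = \<zero>")
          case False
          define ib where "ib = inv b0"
          have ib: "ib \<in> K" "b0 \<otimes> ib = \<one>" "ib \<otimes> b0 = \<one>"
            using subfield_m_inv[OF K, of b0] b0 False unfolding ib_def by auto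
          have ibc: "ib \<in> carrier R" using ib Kc by auto
          define \<mu> where "\<mu> = b \<otimes> ib"
          have \<mu>K: "\<mu> \<in> K" unfolding \<mu>_def
            using b ib subringE(6)[OF subfieldE(1)[OF K]] by auto
          have "u = (ib \<otimes> b0) \<otimes> u" using ib c by simp
          also have "\<dots> = ib \<otimes> (b0 \<otimes> u)" using ibc c0 c by (simp add: m_assoc)
          also have "\<dots> = ib \<otimes> (b \<otimes> u0)" using rel(2) by simp
          also have "\<dots> = \<mu> \<otimes> u0" unfolding \<mu>_def using ibc c0 c by (simp add: m_ac)
          finally have uu: "u = \<mu> \<otimes> u0" .
          have "a = a \<otimes> (b0 \<otimes> ib)" using ib c by simp
          also have "\<dots> = (a \<otimes> b0) \<otimes> ib" using ibc c0 c by (simp add: m_assoc)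
          also have "\<dots> = (a0 \<otimes> b) \<otimes> ib" using rel(1) by simp
          also have "\<dots> = \<mu> \<otimes> a0" unfolding \<mu>_def using ibc c0 c by (simp add: m_ac)
          finally have aa: "a = \<mu> \<otimes> a0" .
          have "y = \<mu> \<otimes> x0" unfolding ey ex0 aa uu
            using \<mu>K Kc c0 by (simp add: r_distr subset_iff)
          then show ?thesis using \<mu>K by blast
        next
          case True
          then have a0n: "a0 \<noteq> \<zero>" using ab0 by simp
          define ia where "ia = inv a0"
          have ia: "ia \<in> K" "a0 \<otimes> ia = \<one>" "ia \<otimes> a0 = \<one>"
            using subfield_m_inv[OF K, of a0] a0 a0n unfolding ia_def by auto
          have iac: "ia \<in> carrier R" using ia Kc by auto
          define \<mu> where "\<mu> = a \<otimes> ia"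
          have \<mu>K: "\<mu> \<in> K" unfolding \<mu>_def
            using a ia subringE(6)[OF subfieldE(1)[OF K]] by auto
          have \<mu>c: "\<mu> \<in> carrier R" using \<mu>K Kc by auto
          have "v = (ia \<otimes> a0) \<otimes> v" using ia c by simp
          also have "\<dots> = ia \<otimes> (a0 \<otimes> v)" using iac c0 c by (simp add: m_assoc)
          also have "\<dots> = ia \<otimes> (a \<otimes> v0)" using rel(3) by simp
          also have "\<dots> = \<mu> \<otimes> v0" unfolding \<mu>_def using iac c0 c by (simp add: m_ac)
          finally have vv: "v = \<mu> \<otimes> v0" .
          have "b = (ia \<otimes> a0) \<otimes> b" using ia c by simp
          also have "\<dots> = ia \<otimes> (a0 \<otimes> b)" using iac c0 c by (simp add: m_assoc)
          also have "\<dots> = ia \<otimes> (a \<otimes> b0)" using rel(1) by simp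
          also have "\<dots> = \<mu> \<otimes> b0" unfolding \<mu>_def using iac c0 c by (simp add: m_ac)
          finally have bb: "b = \<mu> \<otimes> b0" .
          have "y = \<alpha> \<otimes> (\<mu> \<otimes> (b0 \<oplus> v0))" unfolding yw ew bb vv
            using \<mu>c c0 by (simp add: r_distr)
          also have "\<dots> = \<mu> \<otimes> (\<alpha> \<otimes> (b0 \<oplus> v0))" using \<mu>c c0 alc by (simp add: m_lcomm)
          also have "\<dots> = \<mu> \<otimes> x0" using xw0 ew0 by simp
          finally show ?thesis using \<mu>K by blast
        qed
        then show "y \<in> Span K [x0]" unfolding SpanEq by blast
      qed
    qed
    moreover have "dimension 1 K (Span K [x0])"
    proof -
      have "independent K [x0]" using x0c x0ne by (intro li_Cons) auto
      then show ?thesis using dimension_independent[of K "[x0]"] by simp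
    qed
    ultimately have "dim K S = 1" using dimI[OF K] by (simp add: over_def)
    then show ?thesis by simp
  qed
qed

end
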